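(* Suppose $\alpha=r\beta+s$ with $r,s\in\mathbb{Q}^d$ and $\beta\in\mathbb{R}$, and let $\mathcal{D}=[0,1)^d$. Then \[\sup_{T_1,\ldots,T_d\geq 1} G(\alpha,\mathcal{D}_T)<\infty .\]
   Context: For a bounded set $\mathcal{D}\subset\mathbb{R}^d$ and $\alpha\in\mathbb{R}^d$, let $S(\alpha,\mathcal{D})=\{m\cdot\alpha \bmod 1 \mid m\in\mathbb{Z}^d\cap\mathcal{D}\}\subset\mathbb{R}/\mathbb{Z}$, and let $G(\alpha,\mathcal{D})$ be the number of distinct lengths of the gaps between consecutive elements of $S(\alpha,\mathcal{D})$ on the circle $\mathbb{R}/\mathbb{Z}$. For $T=\operatorname{diag}(T_1,\ldots,T_d)$ with $T_i>0$, $\mathcal{D}_T=\{xT\mid x\in\mathcal{D}\}$, so here $\mathcal{D}_T=[0,T_1)\times\cdots\times[0,T_d)$. *)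

theory Defs
  imports "HOL-Analysis.Analysis"
begin

definition S_set :: "real ^ 'd \<Rightarrow> (real ^ 'd) set \<Rightarrow> real set" where
  "S_set \<alpha> D = {frac (m \<bullet> \<alpha>) | m. m \<in> D \<and> (\<forall>i. m $ i \<in> \<int>)}"

text \<open>Gap lengths of a finite set X of representatives in [0,1) of points on the circle R/Z:
  the gap after x is the distance to the next point of X counterclockwise (wrapping around).\<close>
definition circle_gaps :: "real set \<Rightarrow> real set" where
  "circle_gaps X = {(if (\<exists>y\<in>X. x < y) then Min {y\<in>X. x < y} else Min X + 1) - x | x. x \<in> X}"

definition G_num :: "real ^ 'd \<Rightarrow> (real ^ 'd) set \<Rightarrow> nat" where
  "G_num \<alpha> D = card (circle_gaps (S_set \<alpha> D))"

definition scale_set :: "real ^ 'd \<Rightarrow> (real ^ 'd) set \<Rightarrow> (real ^ 'd) set" where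
  "scale_set T D = {(\<chi> i. x $ i * T $ i) | x. x \<in> D}"

definition unit_cube :: "(real ^ 'd) set" where
  "unit_cube = {x. \<forall>i. 0 \<le> x $ i \<and> x $ i < 1}"

end

theory Submission
  imports Defs
begin

definition Pset :: "real set \<Rightarrow> real set" where
  "Pset X = {x + of_int k | x k. x \<in> X}"

definition ngap :: "real set \<Rightarrow> real \<Rightarrow> real" where
  "ngap X x = (if (\<exists>y\<in>X. x < y) then Min {y\<in>X. x < y} else Min X + 1) - x"

lemma circle_gaps_ngap: "circle_gaps X = ngap X ` X"
  unfolding circle_gaps_def ngap_def by (simp add: Setcompr_eq_image)

lemma Pset_mem: "x \<in> X \<Longrightarrow> x \<in> Pset X"
  unfolding Pset_def by (rule CollectI, rule exI[of _ x], rule exI[of _ 0]) simp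

lemma Pset_shift: "z \<in> Pset X \<Longrightarrow> z + of_int k \<in> Pset X"
  unfolding Pset_def by auto (metis add.assoc of_int_add)

lemma Pset_shift_iff: "z + of_int k \<in> Pset X \<longleftrightarrow> z \<in> Pset X"
  using Pset_shift[of z X k] Pset_shift[of "z + of_int k" X "-k"] by auto

lemma Pset_frac:
  assumes "X \<subseteq> {0..<1}" "z \<in> Pset X" shows "frac z \<in> X"
proof -
  obtain x k where "z = x + of_int k" "x \<in> X" using assms(2) unfolding Pset_def by auto
  moreover have "frac z = x" using assms(1) \<open>x \<in> X\<close> \<open>z = _\<close> by (auto simp: frac_unique_iff)
  ultimately show ?thesis by simp
qed

lemma Pset_frac_iff:
  "z \<in> Pset X \<longleftrightarrow> frac z \<in> Pset X"
  using Pset_shift_iff[of "frac z" "\<lfloor>z\<rfloor>" X] by (simp add: frac_def)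

context
  fixes X :: "real set"
  assumes fin: "finite X" and sub: "X \<subseteq> {0..<1}"
begin

lemma ngap_props:
  assumes "x \<in> X"
  shows "ngap X x > 0" "x + ngap X x \<in> Pset X"
    "\<And>z. z \<in> Pset X \<Longrightarrow> \<not> (x < z \<and> z < x + ngap X x)"
proof -
  have x01: "0 \<le> x" "x < 1" using sub assms by auto
  have "ngap X x > 0 \<and> x + ngap X x \<in> Pset X \<and> (\<forall>z\<in>Pset X. \<not> (x < z \<and> z < x + ngap X x))"
  proof (cases "\<exists>y\<in>X. x < y")
    case True
    let ?Y = "{y\<in>X. x < y}"
    have fY: "finite ?Y" "?Y \<noteq> {}" using fin True by auto
    define y0 where "y0 = Min ?Y"
    have y0: "y0 \<in> X" "x < y0" using Min_in[OF fY] unfolding y0_def by auto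
    have y0min: "\<And>y. y \<in> X \<Longrightarrow> x < y \<Longrightarrow> y0 \<le> y" unfolding y0_def using fY by auto
    have g: "ngap X x = y0 - x" unfolding ngap_def y0_def using True by simp
    have "\<not> (x < z \<and> z < y0)" if zP: "z \<in> Pset X" for z
    proof
      assume h: "x < z \<and> z < y0"
      obtain x' k where "z = x' + of_int k" "x' \<in> X" using zP unfolding Pset_def by blast
      moreover have "y0 < 1" using y0 sub by auto
      moreover have "0 \<le> x'" "x' < 1" using sub \<open>x' \<in> X\<close> by auto
      ultimately have "real_of_int k < 1" "real_of_int k > -1" using h x01 by linarith+
      then have "k = 0" by linarith
      then show False using h y0min \<open>x' \<in> X\<close> \<open>z = _\<close> by force
    qed
    then show ?thesis using g y0 Pset_mem by auto
  next
    case False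
    have fX: "X \<noteq> {}" using assms by auto
    define m where "m = Min X"
    have m: "m \<in> X" "\<And>y. y \<in> X \<Longrightarrow> m \<le> y" unfolding m_def using fin fX by auto
    have g: "ngap X x = m + 1 - x" unfolding ngap_def m_def using False by simp
    have "m \<le> x" using m assms by auto
    have "\<not> (x < z \<and> z < m + 1)" if zP: "z \<in> Pset X" for z
    proof
      assume h: "x < z \<and> z < m + 1"
      obtain x' k where z: "z = x' + of_int k" "x' \<in> X" using zP unfolding Pset_def by blast
      have "x' \<le> x" using False z(2) by force
      have x'01: "0 \<le> x'" "x' < 1" using sub z by auto
      have "k \<ge> 1" using h z \<open>x' \<le> x\<close> by (smt (verit) of_int_le_0_iff)
      moreover have "k \<le> 1" using h z x'01 m sub by (smt (verit, best) atLeastLessThan_iff of_int_less_iff of_int_1 subsetD)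
      ultimately have "k = 1" by simp
      then show False using h z m(2)[of x'] by auto
    qed
    moreover have "m + 1 \<in> Pset X" using Pset_shift[OF Pset_mem[OF m(1)], of 1] by simp
    moreover have "m + 1 - x > 0" using \<open>m \<le> x\<close> x01 m(1) sub by auto
    ultimately show ?thesis using g by auto
  qed
  then show "ngap X x > 0" "x + ngap X x \<in> Pset X"
    "\<And>z. z \<in> Pset X \<Longrightarrow> \<not> (x < z \<and> z < x + ngap X x)" by auto
qed

lemma ngap_props_shift:
  assumes "x \<in> X" "z \<in> Pset X" shows "\<not> (x + of_int k < z \<and> z < x + of_int k + ngap X x)"
  using ngap_props(3)[OF assms(1), of "z - of_int k"] Pset_shift[OF assms(2), of "-k"] by auto

lemma ngap_unique:
  assumes "z \<in> Pset X" "h > 0" "z + h \<in> Pset X" "\<And>w. w \<in> Pset X \<Longrightarrow> \<not> (z < w \<and> w < z + h)"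
  shows "ngap X (frac z) = h"
proof -
  define x where "x = frac z"
  have x: "x \<in> X" using Pset_frac[OF sub assms(1)] x_def by simp
  have zx: "z = x + of_int \<lfloor>z\<rfloor>" unfolding x_def frac_def by simp
  define g where "g = ngap X x"
  note P = ngap_props[OF x, folded g_def]
  have "\<not> h < g"
  proof
    assume "h < g"
    have e: "x + h = z + h + of_int (- \<lfloor>z\<rfloor>)" using zx by simp
    have "x + h \<in> Pset X" unfolding e by (rule Pset_shift[OF assms(3)])
    then show False using P(3)[of "x + h"] \<open>h < g\<close> assms(2) by auto
  qed
  moreover have "\<not> g < h"
  proof
    assume "g < h"
    have "x + g + of_int \<lfloor>z\<rfloor> \<in> Pset X" using Pset_shift[OF P(2)] by blast
    then show False using assms(4)[of "x + g + of_int \<lfloor>z\<rfloor>"] \<open>g < h\<close> P(1) zx by auto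
  qed
  ultimately show ?thesis unfolding x_def g_def by simp
qed

lemma ngap_inj_aux:
  assumes "x1 \<in> X" "x2 \<in> X"
    "x1 < p" "p \<le> x1 + ngap X x1" "x2 + of_int k < p" "p \<le> x2 + of_int k + ngap X x2"
  shows "x1 = x2 \<and> k = 0"
proof -
  have P1: "x1 \<in> Pset X" "x2 + of_int k \<in> Pset X" using Pset_mem Pset_shift assms by auto
  have "\<not> x2 + of_int k > x1" using ngap_props(3)[OF assms(1) P1(2)] assms by auto
  moreover have "\<not> x2 + of_int k < x1" using ngap_props_shift[OF assms(2) P1(1), of k] assms by auto
  ultimately have e: "x1 = x2 + of_int k" by simp
  have "0 \<le> x1" "x1 < 1" "0 \<le> x2" "x2 < 1" using sub assms by auto
  then have "real_of_int k < 1" "real_of_int k > -1" using e by linarith+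
  then have "k = 0" by linarith
  then show ?thesis using e by simp
qed

lemma abstract_gap:
  fixes \<tau> :: real and \<mu> :: "real \<Rightarrow> int"
  assumes mu: "\<And>x. x \<in> X \<Longrightarrow> x - \<tau> \<in> Pset X \<Longrightarrow> \<mu> (frac (x - \<tau>)) < \<mu> x"
  shows "card (ngap X ` X) \<le> 2 * card {x\<in>X. x - \<tau> \<notin> Pset X} + card {x\<in>X. x + \<tau> \<notin> Pset X}"
proof -
  define F0 where "F0 = {x\<in>X. x - \<tau> \<notin> Pset X}"
  define E0 where "E0 = {x\<in>X. x + \<tau> \<notin> Pset X}"
  define T2 where "T2 = {x\<in>X. x + ngap X x - \<tau> \<notin> Pset X}"
  define T3 where "T3 = {x\<in>X. \<exists>y\<in>Pset X. x - \<tau> < y \<and> y < x + ngap X x - \<tau> \<and> y + \<tau> \<notin> Pset X}"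
  have fins: "finite F0" "finite E0" "finite T2" "finite T3"
    using fin unfolding F0_def E0_def T2_def T3_def by auto
  have nonterm: "frac (x - \<tau>) \<in> X \<and> ngap X (frac (x - \<tau>)) = ngap X x \<and> x - \<tau> \<in> Pset X"
    if x: "x \<in> X" "x \<notin> F0 \<union> T2 \<union> T3" for x
  proof -
    have z: "x - \<tau> \<in> Pset X" using x unfolding F0_def by auto
    have zh: "x - \<tau> + ngap X x \<in> Pset X" using x unfolding T2_def by (auto simp: algebra_simps)
    have no: "\<not> (x - \<tau> < w \<and> w < x - \<tau> + ngap X x)" if w: "w \<in> Pset X" for w
    proof
      assume h: "x - \<tau> < w \<and> w < x - \<tau> + ngap X x"
      have "w + \<tau> \<in> Pset X" using x w h unfolding T3_def by (auto simp: algebra_simps)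
      then show False using ngap_props(3)[OF x(1), of "w + \<tau>"] h by auto
    qed
    have "ngap X (frac (x - \<tau>)) = ngap X x"
      by (rule ngap_unique[OF z ngap_props(1)[OF x(1)] zh no])
    then show ?thesis using Pset_frac[OF sub z] z by simp
  qed
  have cover: "ngap X ` X \<subseteq> ngap X ` (F0 \<union> T2 \<union> T3)"
  proof
    fix g assume "g \<in> ngap X ` X"
    then obtain x where x: "x \<in> X" "g = ngap X x" by auto
    define Y where "Y = {y\<in>X. ngap X y = g}"
    have fY: "finite (\<mu> ` Y)" "\<mu> ` Y \<noteq> {}" using fin x unfolding Y_def by auto
    obtain y where y: "y \<in> Y" "\<mu> y = Min (\<mu> ` Y)" using Min_in[OF fY] by auto
    have "y \<in> F0 \<union> T2 \<union> T3"
    proof (rule ccontr)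
      assume "y \<notin> F0 \<union> T2 \<union> T3"
      note nt = nonterm[OF _ this]
      have yX: "y \<in> X" using y unfolding Y_def by auto
      have "frac (y - \<tau>) \<in> Y" using nt[OF yX] y unfolding Y_def by auto
      then have "\<mu> y \<le> \<mu> (frac (y - \<tau>))" using y fY by simp
      moreover have "\<mu> (frac (y - \<tau>)) < \<mu> y" using mu[OF yX] nt[OF yX] by auto
      ultimately show False by simp
    qed
    then show "g \<in> ngap X ` (F0 \<union> T2 \<union> T3)" using y unfolding Y_def by auto
  qed
  have c2: "card T2 \<le> card F0"
  proof (rule card_inj_on_le[where f = "\<lambda>x. frac (x + ngap X x)"])
    show "inj_on (\<lambda>x. frac (x + ngap X x)) T2"
    proof (rule inj_onI)
      fix x1 x2 assume h: "x1 \<in> T2" "x2 \<in> T2" "frac (x1 + ngap X x1) = frac (x2 + ngap X x2)"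
      have X: "x1 \<in> X" "x2 \<in> X" using h unfolding T2_def by auto
      define k where "k = \<lfloor>x1 + ngap X x1\<rfloor> - \<lfloor>x2 + ngap X x2\<rfloor>"
      have e: "x1 + ngap X x1 = x2 + of_int k + ngap X x2" using h(3) unfolding k_def frac_def by simp
      show "x1 = x2"
        using ngap_inj_aux[OF X, of "x1 + ngap X x1" k] e ngap_props(1)[OF X(1)] ngap_props(1)[OF X(2)]
        by auto
    qed
    show "(\<lambda>x. frac (x + ngap X x)) ` T2 \<subseteq> F0"
    proof
      fix p assume "p \<in> (\<lambda>x. frac (x + ngap X x)) ` T2"
      then obtain x where x: "x \<in> T2" "p = frac (x + ngap X x)" by auto
      have xX: "x \<in> X" using x unfolding T2_def by auto
      have "p \<in> X" using Pset_frac[OF sub ngap_props(2)[OF xX]] x by simp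
      moreover have "p - \<tau> \<notin> Pset X"
      proof
        assume A: "p - \<tau> \<in> Pset X"
        have eq: "p - \<tau> + of_int \<lfloor>x + ngap X x\<rfloor> = x + ngap X x - \<tau>" using x(2) unfolding frac_def by simp
        have "x + ngap X x - \<tau> \<in> Pset X" using Pset_shift[OF A, of "\<lfloor>x + ngap X x\<rfloor>"] unfolding eq .
        then show False using x unfolding T2_def by auto
      qed
      ultimately show "p \<in> F0" unfolding F0_def by auto
    qed
  qed (rule fins)
  define wit where "wit x = (SOME y. y \<in> Pset X \<and> x - \<tau> < y \<and> y < x + ngap X x - \<tau> \<and> y + \<tau> \<notin> Pset X)" for x
  have witP: "wit x \<in> Pset X \<and> x - \<tau> < wit x \<and> wit x < x + ngap X x - \<tau> \<and> wit x + \<tau> \<notin> Pset X" if "x \<in> T3" for x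
    unfolding wit_def by (rule someI_ex) (use that T3_def in auto)
  have c3: "card T3 \<le> card E0"
  proof (rule card_inj_on_le[where f = "\<lambda>x. frac (wit x)"])
    show "inj_on (\<lambda>x. frac (wit x)) T3"
    proof (rule inj_onI)
      fix x1 x2 assume h: "x1 \<in> T3" "x2 \<in> T3" "frac (wit x1) = frac (wit x2)"
      have X: "x1 \<in> X" "x2 \<in> X" using h unfolding T3_def by auto
      define k where "k = \<lfloor>wit x1\<rfloor> - \<lfloor>wit x2\<rfloor>"
      have e: "wit x1 = wit x2 + of_int k" using h(3) unfolding k_def frac_def by simp
      show "x1 = x2"
        using ngap_inj_aux[OF X, of "wit x1 + \<tau>" k] e witP[OF h(1)] witP[OF h(2)] by auto
    qed
    show "(\<lambda>x. frac (wit x)) ` T3 \<subseteq> E0"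
    proof
      fix p assume "p \<in> (\<lambda>x. frac (wit x)) ` T3"
      then obtain x where x: "x \<in> T3" "p = frac (wit x)" by auto
      have "p \<in> X" using Pset_frac[OF sub] witP[OF x(1)] x by simp
      moreover have "p + \<tau> \<notin> Pset X"
      proof
        assume "p + \<tau> \<in> Pset X"
        then have "p + \<tau> + of_int \<lfloor>wit x\<rfloor> \<in> Pset X" by (rule Pset_shift)
        moreover have "p + \<tau> + of_int \<lfloor>wit x\<rfloor> = wit x + \<tau>" using x(2) unfolding frac_def by simp
        ultimately show False using witP[OF x(1)] by auto
      qed
      ultimately show "p \<in> E0" unfolding E0_def by auto
    qed
  qed (rule fins)
  have "card (ngap X ` X) \<le> card (ngap X ` (F0 \<union> T2 \<union> T3))"
    using cover fins by (intro card_mono) auto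
  also have "\<dots> \<le> card (F0 \<union> T2 \<union> T3)" by (rule card_image_le) (use fins in auto)
  also have "\<dots> \<le> card F0 + card T2 + card T3"
    by (metis card_Un_le add_le_mono1 order_trans)
  finally show ?thesis using c2 c3 unfolding F0_def E0_def by simp
qed

end

lemma vecset_eq: "{v::real^'d. \<forall>j. v$j \<in> V j} = vec_lambda ` (Pi\<^sub>E UNIV V)"
proof (intro set_eqI iffI)
  fix v :: "real^'d" assume "v \<in> {v. \<forall>j. v$j \<in> V j}"
  then have "(\<lambda>j. v$j) \<in> Pi\<^sub>E UNIV V" by (simp add: PiE_UNIV_domain)
  moreover have "v = vec_lambda (\<lambda>j. v$j)" by simp
  ultimately show "v \<in> vec_lambda ` (Pi\<^sub>E UNIV V)" by blast
qed (auto simp: PiE_UNIV_domain)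

lemma vecset_card:
  fixes V :: "'d::finite \<Rightarrow> real set"
  assumes "\<And>j. finite (V j)" "\<And>j. card (V j) \<le> K" "K \<ge> 1"
  shows "finite {v::real^'d. \<forall>j. v$j \<in> V j}" "card {v::real^'d. \<forall>j. v$j \<in> V j} \<le> K ^ CARD('d)"
proof -
  have f: "finite (Pi\<^sub>E UNIV V)" using assms by (intro finite_PiE) auto
  then show "finite {v::real^'d. \<forall>j. v$j \<in> V j}" unfolding vecset_eq by simp
  have "card {v::real^'d. \<forall>j. v$j \<in> V j} \<le> card (Pi\<^sub>E UNIV V)"
    unfolding vecset_eq by (rule card_image_le[OF f])
  also have "\<dots> = (\<Prod>j\<in>UNIV. card (V j))" by (simp add: card_PiE)
  also have "\<dots> \<le> K ^ CARD('d)" by (rule prod_le_power) (use assms in auto)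
  finally show "card {v::real^'d. \<forall>j. v$j \<in> V j} \<le> K ^ CARD('d)" .
qed

lemma ints_interval_card:
  fixes u w :: real
  shows "finite {t. t \<in> \<int> \<and> u \<le> t \<and> t < u + w}" "card {t. t \<in> \<int> \<and> u \<le> t \<and> t < u + w} \<le> nat \<lceil>w\<rceil>"
proof -
  have sub: "{t. t \<in> \<int> \<and> u \<le> t \<and> t < u + w} \<subseteq> of_int ` {\<lceil>u\<rceil>..<\<lceil>u\<rceil> + \<lceil>w\<rceil>}"
  proof
    fix t assume "t \<in> {t. t \<in> \<int> \<and> u \<le> t \<and> t < u + w}"
    then obtain k where k: "t = of_int k" "u \<le> of_int k" "of_int k < u + w" by (auto elim: Ints_cases)
    have "\<lceil>u\<rceil> \<le> k" using k by (simp add: ceiling_le_iff)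
    moreover have "real_of_int k < of_int \<lceil>u\<rceil> + of_int \<lceil>w\<rceil>" using k le_of_int_ceiling[of u] le_of_int_ceiling[of w] by linarith
    then have "real_of_int k < of_int (\<lceil>u\<rceil> + \<lceil>w\<rceil>)" by simp
    then have "k < \<lceil>u\<rceil> + \<lceil>w\<rceil>" by (simp only: of_int_less_iff)
    ultimately show "t \<in> of_int ` {\<lceil>u\<rceil>..<\<lceil>u\<rceil> + \<lceil>w\<rceil>}" using k by auto
  qed
  show "finite {t. t \<in> \<int> \<and> u \<le> t \<and> t < u + w}" by (rule finite_subset[OF sub]) auto
  have "card {t. t \<in> \<int> \<and> u \<le> t \<and> t < u + w} \<le> card (of_int ` {\<lceil>u\<rceil>..<\<lceil>u\<rceil> + \<lceil>w\<rceil>} :: real set)"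
    by (rule card_mono[OF _ sub]) auto
  also have "\<dots> \<le> card {\<lceil>u\<rceil>..<\<lceil>u\<rceil> + \<lceil>w\<rceil>}" by (rule card_image_le) auto
  also have "\<dots> = nat \<lceil>w\<rceil>" by simp
  finally show "card {t. t \<in> \<int> \<and> u \<le> t \<and> t < u + w} \<le> nat \<lceil>w\<rceil>" .
qed

lemma frac_int_div:
  fixes k :: real
  assumes "k \<in> \<int>" "Q > (0::nat)"
  shows "frac (k / of_nat Q) \<in> (\<lambda>i. of_int i / of_nat Q) ` {0..<int Q}"
proof -
  obtain n where n: "k = of_int n" using assms(1) by (auto elim: Ints_cases)
  have "frac (k / of_nat Q) = of_int (n mod int Q) / of_nat Q"
  proof (subst frac_unique_iff, intro conjI)
    have e: "n = int Q * (n div int Q) + n mod int Q" by simp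
    have "real_of_int n = real Q * of_int (n div int Q) + of_int (n mod int Q)"
      by (metis e of_int_add of_int_mult of_int_of_nat_eq)
    then have "k / of_nat Q - of_int (n mod int Q) / of_nat Q = of_int (n div int Q)"
      using assms(2) n by (simp add: field_simps)
    then show "k / real Q - real_of_int (n mod int Q) / real Q \<in> \<int>" by simp
    show "0 \<le> real_of_int (n mod int Q) / real Q" using assms by simp
    have "n mod int Q < int Q" using assms by simp
    then have "real_of_int (n mod int Q) < real Q" by linarith
    then show "real_of_int (n mod int Q) / real Q < 1" using assms by simp
  qed
  moreover have "n mod int Q \<in> {0..<int Q}" using assms by simp
  ultimately show ?thesis by blast
qed

definition boxI :: "real^'d \<Rightarrow> (real^'d) set" where
  "boxI T = {m. \<forall>i. m$i \<in> \<int> \<and> 0 \<le> m$i \<and> m$i < T$i}"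

lemma scale_cube: assumes "\<forall>i. T$i > 0"
  shows "scale_set T unit_cube = {y. \<forall>i. 0 \<le> y$i \<and> y$i < T$i}"
proof (intro set_eqI iffI)
  fix y assume "y \<in> scale_set T unit_cube"
  then obtain x where x: "y = (\<chi> i. x$i * T$i)" "\<forall>i. 0 \<le> x$i \<and> x$i < 1"
    unfolding scale_set_def unit_cube_def by auto
  show "y \<in> {y. \<forall>i. 0 \<le> y$i \<and> y$i < T$i}"
  proof (simp, intro allI conjI)
    fix i show "0 \<le> y$i" using x assms[rule_format, of i] by simp
    show "y$i < T$i" using x assms[rule_format, of i] by simp
  qed
next
  fix y assume y: "y \<in> {y. \<forall>i. 0 \<le> y$i \<and> y$i < T$i}"
  define x where "x = (\<chi> i. y$i / T$i)"
  have "x \<in> unit_cube" unfolding unit_cube_def x_def using y assms by (auto simp: divide_simps)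
  moreover have "y = (\<chi> i. x$i * T$i)" unfolding x_def using assms by (auto simp: vec_eq_iff less_le)
  ultimately show "y \<in> scale_set T unit_cube" unfolding scale_set_def by blast
qed

lemma S_set_box: assumes "\<forall>i. T$i > 0"
  shows "S_set \<alpha> (scale_set T unit_cube) = (\<lambda>m. frac (m \<bullet> \<alpha>)) ` boxI T"
  unfolding S_set_def scale_cube[OF assms] boxI_def by auto

lemma inner_sum: "m \<bullet> v = (\<Sum>i\<in>UNIV. m$i * v$i)" for m v :: "real^'d"
  by (simp add: inner_vec_def)

lemma Ints_inner: "(\<And>i. m$i \<in> \<int>) \<Longrightarrow> (\<And>i. v$i \<in> \<int>) \<Longrightarrow> m \<bullet> v \<in> \<int>" for m v :: "real^'d"
  unfolding inner_sum by (intro Ints_sum Ints_mult) auto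

lemma inner_upd2:
  "(\<chi> k. m$k + (if k = i then u else 0) + (if k = j then w else 0)) \<bullet> v = m \<bullet> v + u * v$i + w * v$j"
  for m v :: "real^'d"
proof -
  have "(\<chi> k. m$k + (if k = i then u else 0) + (if k = j then w else 0)) \<bullet> v
     = (\<Sum>k\<in>UNIV. m$k * v$k + (if k = i then u * v$i else 0) + (if k = j then w * v$j else 0))"
    unfolding inner_sum by (intro sum.cong) (auto simp: algebra_simps)
  also have "\<dots> = m \<bullet> v + u * v$i + w * v$j" by (simp add: sum.distrib inner_sum)
  finally show ?thesis .
qed

lemma ints_interval0: "finite {t::real. t \<in> \<int> \<and> 0 \<le> t \<and> t < w}" "card {t. t \<in> \<int> \<and> 0 \<le> t \<and> t < w} \<le> nat \<lceil>w\<rceil>"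
  using ints_interval_card[of 0 w] by simp_all

lemma boxI_finite: "finite (boxI T)"
proof -
  have "boxI T \<subseteq> {v. \<forall>j. v$j \<in> {t. t \<in> \<int> \<and> 0 \<le> t \<and> t < 0 + T$j}}" unfolding boxI_def by auto
  moreover have "finite {v::real^'a. \<forall>j. v$j \<in> {t. t \<in> \<int> \<and> 0 \<le> t \<and> t < 0 + T$j}}"
    by (rule vecset_card(1)[where K = "Max (range (\<lambda>j. card {t. t \<in> \<int> \<and> 0 \<le> t \<and> t < 0 + T$j})) + 1"])
      (auto intro: ints_interval0 le_SucI)
  ultimately show ?thesis by (rule finite_subset)
qed

definition badc :: "real^'d \<Rightarrow> nat \<Rightarrow> nat \<Rightarrow> real^'d \<Rightarrow> 'd \<Rightarrow> real set" where
  "badc a Q A T j = {t. t \<in> \<int> \<and> 0 \<le> t \<and> t < T$j \<and>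
     (a$j \<noteq> 0 \<and> T$j > real Q * (real A + 1) \<longrightarrow> t < real Q * real A \<or> T$j - real Q * real A \<le> t)}"

lemma Pset_from_box:
  assumes "X = (\<lambda>m. frac (m \<bullet> \<alpha>)) ` M" "m' \<in> M" "z - m' \<bullet> \<alpha> \<in> \<int>"
  shows "z \<in> Pset X"
proof -
  have x: "frac (m' \<bullet> \<alpha>) \<in> X" using assms by auto
  obtain k where k: "z - m' \<bullet> \<alpha> = of_int k" using assms(3) by (auto elim: Ints_cases)
  have "z = frac (m' \<bullet> \<alpha>) + of_int (k + \<lfloor>m' \<bullet> \<alpha>\<rfloor>)" using k unfolding frac_def by simp
  then show ?thesis unfolding Pset_def using x by blast
qed

lemma int_abs_ge1: "x \<in> \<int> \<Longrightarrow> x \<noteq> 0 \<Longrightarrow> \<bar>x\<bar> \<ge> (1::real)"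
  by (auto elim!: Ints_cases)

locale gapsetup =
  fixes \<alpha> a b :: "real^'d" and \<theta> :: real and Q A :: nat
  assumes Qpos: "Q > 0" and aint: "\<And>i. a$i \<in> \<int>" and bint: "\<And>i. b$i \<in> \<int>"
    and alpha: "\<And>i. \<alpha>$i = \<theta> * a$i + b$i / Q" and Ab: "\<And>i. \<bar>a$i\<bar> \<le> A" and A1: "A \<ge> 1"
begin

lemma dot_alpha: "m \<bullet> \<alpha> = \<theta> * (m \<bullet> a) + (m \<bullet> b) / Q"
  by (simp add: inner_sum alpha sum_distrib_left sum_divide_distrib distrib_left sum.distrib algebra_simps)

lemma int_alpha:
  assumes irr: "\<theta> \<notin> \<rat>" and u: "\<And>i. u$i \<in> \<int>" and ua: "u \<bullet> \<alpha> \<in> \<int>"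
  shows "u \<bullet> a = 0"
proof (rule ccontr)
  assume n0: "u \<bullet> a \<noteq> 0"
  have n: "u \<bullet> a \<in> \<rat>" "u \<bullet> b \<in> \<rat>" using Ints_inner[OF u aint] Ints_inner[OF u bint] Ints_subset_Rats by auto
  have "\<theta> = (u \<bullet> \<alpha> - (u \<bullet> b) / Q) / (u \<bullet> a)" using n0 dot_alpha[of u] by (simp add: field_simps)
  moreover have "(u \<bullet> \<alpha> - (u \<bullet> b) / Q) / (u \<bullet> a) \<in> \<rat>" using n ua Ints_subset_Rats by (intro Rats_divide Rats_diff) auto
  ultimately show False using irr by simp
qed

lemma bad_count:
  assumes T1: "T$j \<ge> 1"
  shows "finite ((\<lambda>t. frac (t * \<alpha>$j)) ` badc a Q A T j)"
    "card ((\<lambda>t. frac (t * \<alpha>$j)) ` badc a Q A T j) \<le> Q * (3 * A + 2)"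
proof -
  have sub0: "badc a Q A T j \<subseteq> {t. t \<in> \<int> \<and> 0 \<le> t \<and> t < T$j}" unfolding badc_def by auto
  have finb: "finite (badc a Q A T j)" by (rule finite_subset[OF sub0 ints_interval0(1)])
  then show "finite ((\<lambda>t. frac (t * \<alpha>$j)) ` badc a Q A T j)" by simp
  have cardimg: "card ((\<lambda>t. frac (t * \<alpha>$j)) ` badc a Q A T j) \<le> card (badc a Q A T j)"
    by (rule card_image_le[OF finb])
  show "card ((\<lambda>t. frac (t * \<alpha>$j)) ` badc a Q A T j) \<le> Q * (3 * A + 2)"
  proof (cases "T$j > real Q * (real A + 1)")
    case False
    have "badc a Q A T j \<subseteq> {t. t \<in> \<int> \<and> 0 \<le> t \<and> t < real Q * (real A + 1)}"
      using False unfolding badc_def by auto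
    then have "card (badc a Q A T j) \<le> nat \<lceil>real Q * (real A + 1)\<rceil>"
      using card_mono[OF ints_interval0(1)] ints_interval0(2) order_trans by blast
    also have "\<dots> = Q * (A + 1)" by (metis ceiling_of_nat nat_int of_nat_1 of_nat_add of_nat_mult)
    finally show ?thesis using cardimg by simp
  next
    case True
    show ?thesis
    proof (cases "a$j = 0")
      case False
      let ?W = "real Q * real A"
      have "badc a Q A T j \<subseteq> {t. t \<in> \<int> \<and> 0 \<le> t \<and> t < 0 + ?W} \<union> {t. t \<in> \<int> \<and> T$j - ?W \<le> t \<and> t < (T$j - ?W) + ?W}"
        using False True unfolding badc_def by auto
      then have "card (badc a Q A T j) \<le> card ({t. t \<in> \<int> \<and> 0 \<le> t \<and> t < 0 + ?W} \<union> {t. t \<in> \<int> \<and> T$j - ?W \<le> t \<and> t < (T$j - ?W) + ?W})"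
        using ints_interval_card(1)[of 0 ?W] ints_interval_card(1)[of "T$j - ?W" ?W] by (intro card_mono) auto
      also have "\<dots> \<le> card {t. t \<in> \<int> \<and> 0 \<le> t \<and> t < 0 + ?W} + card {t. t \<in> \<int> \<and> T$j - ?W \<le> t \<and> t < (T$j - ?W) + ?W}"
        by (rule card_Un_le)
      also have "\<dots> \<le> nat \<lceil>?W\<rceil> + nat \<lceil>?W\<rceil>" by (intro add_mono ints_interval_card)
      also have "nat \<lceil>?W\<rceil> = Q * A" by (metis ceiling_of_nat nat_int of_nat_mult)
      finally show ?thesis using cardimg by simp
    next
      case True
      have "(\<lambda>t. frac (t * \<alpha>$j)) ` badc a Q A T j \<subseteq> (\<lambda>i. of_int i / of_nat Q) ` {0..<int Q}"
      proof
        fix y assume "y \<in> (\<lambda>t. frac (t * \<alpha>$j)) ` badc a Q A T j"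
        then obtain t where t: "t \<in> \<int>" "y = frac (t * \<alpha>$j)" unfolding badc_def by auto
        have "y = frac ((t * b$j) / of_nat Q)" using t True alpha[of j] by simp
        moreover have "t * b$j \<in> \<int>" using t bint by auto
        ultimately show "y \<in> (\<lambda>i. of_int i / of_nat Q) ` {0..<int Q}" using frac_int_div Qpos by auto
      qed
      then have "card ((\<lambda>t. frac (t * \<alpha>$j)) ` badc a Q A T j) \<le> card ((\<lambda>i. of_int i / of_nat Q) ` {0..<int Q} :: real set)"
        by (intro card_mono) auto
      also have "\<dots> \<le> card {0..<int Q}" by (rule card_image_le) auto
      finally show ?thesis by simp
    qed
  qed
qed

lemma box_upd:
  assumes "m \<in> boxI T" "i \<noteq> j" "u \<in> \<int>" "w \<in> \<int>" "0 \<le> m$i + u" "m$i + u < T$i" "0 \<le> m$j + w" "m$j + w < T$j"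
  shows "(\<chi> k. m$k + (if k = i then u else 0) + (if k = j then w else 0)) \<in> boxI T"
  using assms unfolding boxI_def by auto

lemma escape:
  assumes i0: "a$i0 \<noteq> 0" "T$i0 > real Q * (real A + 1)"
    and m: "m \<in> boxI T"
    and j: "a$j \<noteq> 0" "T$j > real Q * (real A + 1)" "real Q * real A \<le> m$j" "m$j < T$j - real Q * real A"
  shows "\<exists>m'\<in>boxI T. real Q \<le> m'$i0 \<and> m' \<bullet> \<alpha> - m \<bullet> \<alpha> \<in> \<int>"
    and "\<exists>m'\<in>boxI T. m'$i0 < T$i0 - real Q \<and> m' \<bullet> \<alpha> - m \<bullet> \<alpha> \<in> \<int>"
proof -
  define s where "s = (if a$j > 0 then 1 else -1 :: real)"
  have sa: "s * a$j = \<bar>a$j\<bar>" unfolding s_def by auto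
  have e': "s * real Q * a $ j = real Q * \<bar>a$j\<bar>" by (metis sa mult.commute mult.left_commute)
  have sint: "s \<in> \<int>" unfolding s_def by auto
  have ss: "\<bar>s * real Q * a$i0\<bar> = real Q * \<bar>a$i0\<bar>" unfolding s_def by (auto simp: abs_mult)
  have aj1: "1 \<le> \<bar>a$j\<bar>" by (rule int_abs_ge1[OF aint j(1)])
  have ajA: "\<bar>a$j\<bar> \<le> A" "\<bar>a$i0\<bar> \<le> A" using Ab by auto
  have QA1: "real Q \<le> real Q * \<bar>a$j\<bar>" using mult_left_mono[OF aj1, of "real Q"] by simp
  have QA2: "real Q * \<bar>a$j\<bar> \<le> real Q * real A" "real Q * \<bar>a$i0\<bar> \<le> real Q * real A"
    using ajA by (auto intro: mult_left_mono)
  have QQA: "real Q \<le> real Q * real A" using mult_left_mono[of 1 "real A" "real Q"] A1 by simp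
  have mi: "m$k \<in> \<int>" "0 \<le> m$k" "m$k < T$k" for k using m unfolding boxI_def by auto
  have diffint: "(\<chi> k. m$k + (if k = i0 then c * (s*real Q*a$j) else 0) + (if k = j then - c * (s*real Q*a$i0) else 0)) \<bullet> \<alpha> - m \<bullet> \<alpha> \<in> \<int>"
    if c: "c \<in> \<int>" for c
  proof -
    have "(\<chi> k. m$k + (if k = i0 then c * (s*real Q*a$j) else 0) + (if k = j then - c * (s*real Q*a$i0) else 0)) \<bullet> \<alpha> - m \<bullet> \<alpha>
      = c * (s*real Q*a$j) * \<alpha>$i0 - c * (s*real Q*a$i0) * \<alpha>$j"
      unfolding inner_upd2 by simp
    also have "\<dots> = c * s * (a$j * b$i0 - a$i0 * b$j)" using Qpos unfolding alpha by (simp add: field_simps)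
    finally show ?thesis using c sint aint bint by (simp add: Ints_mult Ints_diff)
  qed
  show "\<exists>m'\<in>boxI T. real Q \<le> m'$i0 \<and> m' \<bullet> \<alpha> - m \<bullet> \<alpha> \<in> \<int>"
  proof (cases "real Q \<le> m$i0")
    case True then show ?thesis using m by force
  next
    case False
    have ji: "i0 \<noteq> j" using False j(3) QQA by auto
    let ?m = "(\<chi> k. m$k + (if k = i0 then 1 * (s*real Q*a$j) else 0) + (if k = j then - 1 * (s*real Q*a$i0) else 0))"
    have e: "1 * (s * real Q * a $ j) = real Q * \<bar>a$j\<bar>" using e' by simp
    have "?m \<in> boxI T"
    proof (rule box_upd[OF m ji])
      show "1 * (s * real Q * a $ j) \<in> \<int>" "- 1 * (s * real Q * a $ i0) \<in> \<int>" using sint aint by auto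
      show "0 \<le> m $ i0 + 1 * (s * real Q * a $ j)" unfolding e using mi[of i0] by simp
      show "m $ i0 + 1 * (s * real Q * a $ j) < T $ i0" unfolding e using False QA2 i0(2) by (simp add: algebra_simps)
      show "0 \<le> m $ j + - 1 * (s * real Q * a $ i0)" using ss QA2 j(3) abs_ge_self[of "s * real Q * a$i0"] abs_ge_minus_self[of "s * real Q * a$i0"] by linarith
      show "m $ j + - 1 * (s * real Q * a $ i0) < T $ j" using ss QA2 j(4) abs_ge_self[of "s * real Q * a$i0"] abs_ge_minus_self[of "s * real Q * a$i0"] by linarith
    qed
    moreover have "?m $ i0 = m $ i0 + 1 * (s * real Q * a $ j)" using ji by simp
    then have "real Q \<le> ?m $ i0" unfolding e using QA1 mi[of i0] by simp
    ultimately show ?thesis using diffint[of 1] by force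
  qed
  show "\<exists>m'\<in>boxI T. m'$i0 < T$i0 - real Q \<and> m' \<bullet> \<alpha> - m \<bullet> \<alpha> \<in> \<int>"
  proof (cases "m$i0 < T$i0 - real Q")
    case True then show ?thesis using m by force
  next
    case False
    have ji: "i0 \<noteq> j" using False j(4) QQA by auto
    let ?m = "(\<chi> k. m$k + (if k = i0 then (-1) * (s*real Q*a$j) else 0) + (if k = j then - (-1) * (s*real Q*a$i0) else 0))"
    have e: "(-1) * (s * real Q * a $ j) = - (real Q * \<bar>a$j\<bar>)" using e' by simp
    have "?m \<in> boxI T"
    proof (rule box_upd[OF m ji])
      show "(-1) * (s * real Q * a $ j) \<in> \<int>" "- (-1) * (s * real Q * a $ i0) \<in> \<int>" using sint aint by auto
      show "0 \<le> m $ i0 + (-1) * (s * real Q * a $ j)" unfolding e using False QA2 i0(2) by (simp add: algebra_simps)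
      show "m $ i0 + (-1) * (s * real Q * a $ j) < T $ i0" proof -
        have "0 \<le> real Q * \<bar>a$j\<bar>" by simp
        then show ?thesis unfolding e using mi[of i0] by linarith
      qed
      show "0 \<le> m $ j + - (-1) * (s * real Q * a $ i0)" using ss QA2 j(3) abs_ge_self[of "s * real Q * a$i0"] abs_ge_minus_self[of "s * real Q * a$i0"] by linarith
      show "m $ j + - (-1) * (s * real Q * a $ i0) < T $ j" using ss QA2 j(4) abs_ge_self[of "s * real Q * a$i0"] abs_ge_minus_self[of "s * real Q * a$i0"] by linarith
    qed
    moreover have "?m $ i0 = m $ i0 + (-1) * (s * real Q * a $ j)" using ji by simp
    then have "?m $ i0 < T$i0 - real Q" unfolding e using QA1 mi[of i0] by simp
    ultimately show ?thesis using diffint[of "-1"] by force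
  qed
qed

end

lemma inner_upd1: "(\<chi> k. m$k + (if k = i then u else 0)) \<bullet> v = m \<bullet> v + u * v$i" for m v :: "real^'d"
  using inner_upd2[of m i u i 0 v] by simp

lemma frac_sum_frac: "frac (\<Sum>j\<in>UNIV. frac (f j)) = frac (\<Sum>j\<in>UNIV. f j)" for f :: "'d \<Rightarrow> real"
proof -
  have eq: "(\<Sum>j\<in>UNIV. frac (f j)) = (\<Sum>j\<in>UNIV. f j) + of_int (- (\<Sum>j\<in>UNIV. \<lfloor>f j\<rfloor>))"
    by (simp add: frac_def sum_subtractf)
  show ?thesis unfolding eq by (rule frac_add_of_int_right)
qed

context gapsetup begin

lemma image_bad:
  assumes T: "\<forall>i. T$i \<ge> 1"
  shows "card ((\<lambda>m. frac (m \<bullet> \<alpha>)) ` {m \<in> boxI T. \<forall>j. m$j \<in> badc a Q A T j}) \<le> (Q * (3 * A + 2)) ^ CARD('d)"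
proof -
  define V where "V j = (\<lambda>t. frac (t * \<alpha>$j)) ` badc a Q A T j" for j
  have sub: "(\<lambda>m. frac (m \<bullet> \<alpha>)) ` {m \<in> boxI T. \<forall>j. m$j \<in> badc a Q A T j}
      \<subseteq> (\<lambda>v. frac (\<Sum>j\<in>UNIV. v$j)) ` {v. \<forall>j. v$j \<in> V j}"
  proof
    fix y assume "y \<in> (\<lambda>m. frac (m \<bullet> \<alpha>)) ` {m \<in> boxI T. \<forall>j. m$j \<in> badc a Q A T j}"
    then obtain m where m: "\<forall>j. m$j \<in> badc a Q A T j" "y = frac (m \<bullet> \<alpha>)" by auto
    define v where "v = (\<chi> j. frac (m$j * \<alpha>$j))"
    have "v \<in> {v. \<forall>j. v$j \<in> V j}" unfolding v_def V_def using m by auto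
    moreover have "y = frac (\<Sum>j\<in>UNIV. v$j)"
      unfolding v_def m(2) inner_sum using frac_sum_frac[of "\<lambda>j. m$j * \<alpha>$j"] by simp
    ultimately show "y \<in> (\<lambda>v. frac (\<Sum>j\<in>UNIV. v$j)) ` {v. \<forall>j. v$j \<in> V j}" by blast
  qed
  have K1: "Q * (3 * A + 2) \<ge> 1" using Qpos by simp
  have fV: "\<And>j. finite (V j)" "\<And>j. card (V j) \<le> Q * (3 * A + 2)"
    unfolding V_def using bad_count T by auto
  have "card ((\<lambda>m. frac (m \<bullet> \<alpha>)) ` {m \<in> boxI T. \<forall>j. m$j \<in> badc a Q A T j})
      \<le> card ((\<lambda>v. frac (\<Sum>j\<in>UNIV. v$j)) ` {v. \<forall>j. v$j \<in> V j})"
    by (rule card_mono[OF _ sub]) (intro finite_imageI vecset_card(1)[OF fV K1])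
  also have "\<dots> \<le> card {v::real^'d. \<forall>j. v$j \<in> V j}" by (rule card_image_le[OF vecset_card(1)[OF fV K1]])
  also have "\<dots> \<le> (Q * (3 * A + 2)) ^ CARD('d)" by (rule vecset_card(2)[OF fV K1])
  finally show ?thesis .
qed

lemma FE_sub:
  assumes i0: "a$i0 \<noteq> 0" "T$i0 > real Q * (real A + 1)" and X: "X = (\<lambda>m. frac (m \<bullet> \<alpha>)) ` boxI T"
  shows "{x\<in>X. x - real Q * \<alpha>$i0 \<notin> Pset X} \<subseteq> (\<lambda>m. frac (m \<bullet> \<alpha>)) ` {m \<in> boxI T. \<forall>j. m$j \<in> badc a Q A T j}"
    and "{x\<in>X. x + real Q * \<alpha>$i0 \<notin> Pset X} \<subseteq> (\<lambda>m. frac (m \<bullet> \<alpha>)) ` {m \<in> boxI T. \<forall>j. m$j \<in> badc a Q A T j}"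
proof -
  have key: "(\<forall>j. m$j \<in> badc a Q A T j) \<or> (\<exists>j. a$j \<noteq> 0 \<and> T$j > real Q * (real A + 1) \<and> real Q * real A \<le> m$j \<and> m$j < T$j - real Q * real A)"
    if "m \<in> boxI T" for m
    using that unfolding boxI_def badc_def by force
  show "{x\<in>X. x - real Q * \<alpha>$i0 \<notin> Pset X} \<subseteq> (\<lambda>m. frac (m \<bullet> \<alpha>)) ` {m \<in> boxI T. \<forall>j. m$j \<in> badc a Q A T j}"
  proof
    fix x assume x: "x \<in> {x\<in>X. x - real Q * \<alpha>$i0 \<notin> Pset X}"
    then obtain m where m: "m \<in> boxI T" "x = frac (m \<bullet> \<alpha>)" using X by auto
    show "x \<in> (\<lambda>m. frac (m \<bullet> \<alpha>)) ` {m \<in> boxI T. \<forall>j. m$j \<in> badc a Q A T j}"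
    proof (cases "\<forall>j. m$j \<in> badc a Q A T j")
      case True then show ?thesis using m by auto
    next
      case False
      then obtain j where j: "a$j \<noteq> 0" "T$j > real Q * (real A + 1)" "real Q * real A \<le> m$j" "m$j < T$j - real Q * real A"
        using key[OF m(1)] by blast
      obtain m' where m': "m' \<in> boxI T" "real Q \<le> m'$i0" "m' \<bullet> \<alpha> - m \<bullet> \<alpha> \<in> \<int>"
        using escape(1)[OF i0 m(1) j] by blast
      define m2 where "m2 = (\<chi> k. m'$k + (if k = i0 then - real Q else 0))"
      have mi: "\<And>k. m'$k \<in> \<int> \<and> 0 \<le> m'$k \<and> m'$k < T$k" using m'(1) unfolding boxI_def by auto
      have "\<forall>k. m2$k \<in> \<int> \<and> 0 \<le> m2$k \<and> m2$k < T$k"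
      proof
        fix k show "m2$k \<in> \<int> \<and> 0 \<le> m2$k \<and> m2$k < T$k"
          using mi[of k] m'(2) of_nat_0_le_iff[of Q] by (cases "k = i0") (auto simp: m2_def)
      qed
      then have m2: "m2 \<in> boxI T" unfolding boxI_def by auto
      have "m2 \<bullet> \<alpha> = m' \<bullet> \<alpha> - real Q * \<alpha>$i0" unfolding m2_def inner_upd1 by simp
      then have "x - real Q * \<alpha>$i0 - m2 \<bullet> \<alpha> = - \<lfloor>m \<bullet> \<alpha>\<rfloor> - (m' \<bullet> \<alpha> - m \<bullet> \<alpha>)"
        unfolding m(2) frac_def by simp
      also have "\<dots> \<in> \<int>" by (rule Ints_diff[OF _ m'(3)]) simp
      finally have "x - real Q * \<alpha>$i0 \<in> Pset X" by (rule Pset_from_box[OF X m2])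
      then show ?thesis using x by auto
    qed
  qed
  show "{x\<in>X. x + real Q * \<alpha>$i0 \<notin> Pset X} \<subseteq> (\<lambda>m. frac (m \<bullet> \<alpha>)) ` {m \<in> boxI T. \<forall>j. m$j \<in> badc a Q A T j}"
  proof
    fix x assume x: "x \<in> {x\<in>X. x + real Q * \<alpha>$i0 \<notin> Pset X}"
    then obtain m where m: "m \<in> boxI T" "x = frac (m \<bullet> \<alpha>)" using X by auto
    show "x \<in> (\<lambda>m. frac (m \<bullet> \<alpha>)) ` {m \<in> boxI T. \<forall>j. m$j \<in> badc a Q A T j}"
    proof (cases "\<forall>j. m$j \<in> badc a Q A T j")
      case True then show ?thesis using m by auto
    next
      case False
      then obtain j where j: "a$j \<noteq> 0" "T$j > real Q * (real A + 1)" "real Q * real A \<le> m$j" "m$j < T$j - real Q * real A"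
        using key[OF m(1)] by blast
      obtain m' where m': "m' \<in> boxI T" "m'$i0 < T$i0 - real Q" "m' \<bullet> \<alpha> - m \<bullet> \<alpha> \<in> \<int>"
        using escape(2)[OF i0 m(1) j] by blast
      define m2 where "m2 = (\<chi> k. m'$k + (if k = i0 then real Q else 0))"
      have mi: "\<And>k. m'$k \<in> \<int> \<and> 0 \<le> m'$k \<and> m'$k < T$k" using m'(1) unfolding boxI_def by auto
      have "\<forall>k. m2$k \<in> \<int> \<and> 0 \<le> m2$k \<and> m2$k < T$k"
      proof
        fix k show "m2$k \<in> \<int> \<and> 0 \<le> m2$k \<and> m2$k < T$k"
          using mi[of k] m'(2) of_nat_0_le_iff[of Q] by (cases "k = i0") (auto simp: m2_def)
      qed
      then have m2: "m2 \<in> boxI T" unfolding boxI_def by auto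
      have "m2 \<bullet> \<alpha> = m' \<bullet> \<alpha> + real Q * \<alpha>$i0" unfolding m2_def inner_upd1 by simp
      then have "x + real Q * \<alpha>$i0 - m2 \<bullet> \<alpha> = - \<lfloor>m \<bullet> \<alpha>\<rfloor> - (m' \<bullet> \<alpha> - m \<bullet> \<alpha>)"
        unfolding m(2) frac_def by simp
      also have "\<dots> \<in> \<int>" by (rule Ints_diff[OF _ m'(3)]) simp
      finally have "x + real Q * \<alpha>$i0 \<in> Pset X" by (rule Pset_from_box[OF X m2])
      then show ?thesis using x by auto
    qed
  qed
qed

end

context gapsetup begin

lemma mu_ok:
  assumes irr: "\<theta> \<notin> \<rat>" and i0: "a$i0 \<noteq> 0" and X: "X = (\<lambda>m. frac (m \<bullet> \<alpha>)) ` boxI T"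
    and rep: "\<And>y. y \<in> X \<Longrightarrow> rep y \<in> boxI T \<and> frac (rep y \<bullet> \<alpha>) = y"
    and x: "x \<in> X" and xt: "x - real Q * \<alpha>$i0 \<in> Pset X"
  shows "\<lfloor>sgn (a$i0) * (rep (frac (x - real Q * \<alpha>$i0)) \<bullet> a)\<rfloor> < \<lfloor>sgn (a$i0) * (rep x \<bullet> a)\<rfloor>"
proof -
  have sub: "X \<subseteq> {0..<1}" using X by (auto simp: frac_lt_1)
  define x' where "x' = frac (x - real Q * \<alpha>$i0)"
  have x': "x' \<in> X" unfolding x'_def by (rule Pset_frac[OF sub xt])
  define m0 where "m0 = rep x"
  define m1 where "m1 = rep x'"
  have m0: "m0 \<in> boxI T" "frac (m0 \<bullet> \<alpha>) = x" using rep[OF x] unfolding m0_def by auto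
  have m1: "m1 \<in> boxI T" "frac (m1 \<bullet> \<alpha>) = x'" using rep[OF x'] unfolding m1_def by auto
  define u where "u = (\<chi> k. m0$k + (if k = i0 then - real Q else 0)) - m1"
  have uint: "\<And>k. u$k \<in> \<int>" using m0(1) m1(1) unfolding u_def boxI_def by auto
  have "u \<bullet> \<alpha> = m0 \<bullet> \<alpha> - real Q * \<alpha>$i0 - m1 \<bullet> \<alpha>" unfolding u_def inner_diff_left inner_upd1 by simp
  also have "\<dots> = (m0 \<bullet> \<alpha> - x) + (x - real Q * \<alpha>$i0 - x') + (x' - m1 \<bullet> \<alpha>)" by simp
  also have "\<dots> \<in> \<int>"
  proof (intro Ints_add)
    have zf: "\<And>z::real. z - frac z \<in> \<int>" by (simp add: frac_def)
    show "m0 \<bullet> \<alpha> - x \<in> \<int>" using zf[of "m0 \<bullet> \<alpha>"] m0(2) by simp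
    show "x - real Q * \<alpha> $ i0 - x' \<in> \<int>" using zf[of "x - real Q * \<alpha> $ i0"] unfolding x'_def by simp
    have "- (m1 \<bullet> \<alpha> - frac (m1 \<bullet> \<alpha>)) \<in> \<int>" using zf[of "m1 \<bullet> \<alpha>"] by (rule Ints_minus)
    then show "x' - m1 \<bullet> \<alpha> \<in> \<int>" using m1(2) by simp
  qed
  finally have "u \<bullet> a = 0" by (rule int_alpha[OF irr uint])
  then have h: "m1 \<bullet> a = m0 \<bullet> a - real Q * a$i0" unfolding u_def inner_diff_left inner_upd1 by simp
  have e0: "sgn (a$i0) * (m1 \<bullet> a) = sgn (a$i0) * (m0 \<bullet> a) - real Q * (sgn (a$i0) * a$i0)"
    by (simp only: h) (simp add: algebra_simps)
  have sg: "sgn (a$i0) * a$i0 = \<bar>a$i0\<bar>" by (simp add: abs_sgn mult.commute)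
  have e: "sgn (a$i0) * (m1 \<bullet> a) = sgn (a$i0) * (m0 \<bullet> a) - real Q * \<bar>a$i0\<bar>"
    using e0 unfolding sg .
  have "1 \<le> \<bar>a$i0\<bar>" by (rule int_abs_ge1[OF aint i0])
  then have "1 \<le> real Q * \<bar>a$i0\<bar>" using Qpos mult_mono[of 1 "real Q" 1 "\<bar>a$i0\<bar>"] by simp
  then have "\<lfloor>sgn (a$i0) * (m1 \<bullet> a)\<rfloor> \<le> \<lfloor>sgn (a$i0) * (m0 \<bullet> a) - 1\<rfloor>" unfolding e by (intro floor_mono) simp
  also have "\<dots> < \<lfloor>sgn (a$i0) * (m0 \<bullet> a)\<rfloor>" by simp
  finally show ?thesis unfolding m0_def m1_def x'_def .
qed

lemma main_irr:
  assumes irr: "\<theta> \<notin> \<rat>" and T: "\<forall>i. T$i \<ge> 1"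
  shows "card (circle_gaps (S_set \<alpha> (scale_set T unit_cube))) \<le> 3 * (Q * (3 * A + 2)) ^ CARD('d)"
proof -
  define X where "X = (\<lambda>m. frac (m \<bullet> \<alpha>)) ` boxI T"
  have SX: "S_set \<alpha> (scale_set T unit_cube) = X" unfolding X_def
  proof (rule S_set_box)
    show "\<forall>i. 0 < T $ i" using T by (metis less_le_trans zero_less_one)
  qed
  have finX: "finite X" unfolding X_def by (intro finite_imageI boxI_finite)
  have subX: "X \<subseteq> {0..<1}" unfolding X_def by (auto simp: frac_lt_1)
  define N where "N = (Q * (3 * A + 2)) ^ CARD('d)"
  define Bd where "Bd = (\<lambda>m. frac (m \<bullet> \<alpha>)) ` {m \<in> boxI T. \<forall>j. m$j \<in> badc a Q A T j}"
  have cB: "card Bd \<le> N" unfolding Bd_def N_def by (rule image_bad[OF T])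
  have fB: "finite Bd" unfolding Bd_def by (intro finite_imageI finite_subset[OF _ boxI_finite]) auto
  have "card (ngap X ` X) \<le> 3 * N"
  proof (cases "\<exists>i0. a$i0 \<noteq> 0 \<and> T$i0 > real Q * (real A + 1)")
    case True
    then obtain i0 where i0: "a$i0 \<noteq> 0" "T$i0 > real Q * (real A + 1)" by blast
    define rep where "rep y = (SOME m. m \<in> boxI T \<and> frac (m \<bullet> \<alpha>) = y)" for y
    have repP: "rep y \<in> boxI T \<and> frac (rep y \<bullet> \<alpha>) = y" if "y \<in> X" for y
      unfolding rep_def by (rule someI_ex) (use that X_def in auto)
    have "card (ngap X ` X) \<le> 2 * card {x\<in>X. x - real Q * \<alpha>$i0 \<notin> Pset X} + card {x\<in>X. x + real Q * \<alpha>$i0 \<notin> Pset X}"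
      by (rule abstract_gap[OF finX subX, where \<mu> = "\<lambda>y. \<lfloor>sgn (a$i0) * (rep y \<bullet> a)\<rfloor>"])
         (rule mu_ok[OF irr i0(1) X_def repP])
    also have "\<dots> \<le> 2 * card Bd + card Bd"
      using FE_sub[OF i0 X_def] fB unfolding Bd_def[symmetric] by (intro add_mono mult_left_mono card_mono) auto
    finally show ?thesis using cB by simp
  next
    case False
    then have "X \<subseteq> Bd" unfolding X_def Bd_def badc_def boxI_def by auto
    then have "card X \<le> card Bd" using fB by (rule card_mono[rotated])
    moreover have "card (ngap X ` X) \<le> card X" using finX by (rule card_image_le)
    ultimately show ?thesis using cB by simp
  qed
  then show ?thesis unfolding SX circle_gaps_ngap N_def .
qed

end

lemma common_denom:
  fixes v :: "real^'d"
  assumes "\<forall>i. v$i \<in> \<rat>"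
  shows "\<exists>L::nat. L > 0 \<and> (\<forall>i. real L * v$i \<in> \<int>)"
proof -
  have ex: "\<exists>q::nat. q > 0 \<and> real q * v$i \<in> \<int>" for i
  proof -
    obtain p q where pq: "0 < q" "v$i = of_int p / of_int q" using assms Rats_cases' by meson
    then have "real (nat q) * v$i = of_int p" by simp
    then show ?thesis using pq by (intro exI[of _ "nat q"]) auto
  qed
  define d where "d i = (SOME q::nat. q > 0 \<and> real q * v$i \<in> \<int>)" for i
  have d: "d i > 0 \<and> real (d i) * v$i \<in> \<int>" for i unfolding d_def by (rule someI_ex[OF ex])
  define L where "L = (\<Prod>i\<in>UNIV. d i)"
  have "L > 0" unfolding L_def using d by (simp add: prod_pos)
  moreover have "real L * v$i \<in> \<int>" for i
  proof -
    have "L = d i * (\<Prod>j\<in>UNIV - {i}. d j)" unfolding L_def by (simp add: prod.remove)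
    then have eq: "real L * v$i = real (\<Prod>j\<in>UNIV - {i}. d j) * (real (d i) * v$i)" by simp
    show ?thesis unfolding eq by (rule Ints_mult) (use d[of i] in auto)
  qed
  ultimately show ?thesis by blast
qed

lemma rat_case:
  fixes \<alpha> :: "real^'d"
  assumes "\<forall>i. \<alpha>$i \<in> \<rat>"
  shows "\<exists>B::nat. \<forall>T :: real ^ 'd. (\<forall>i. 1 \<le> T $ i) \<longrightarrow> G_num \<alpha> (scale_set T unit_cube) \<le> B"
proof -
  obtain L :: nat where L: "L > 0" "\<And>i. real L * \<alpha>$i \<in> \<int>" using common_denom[OF assms] by blast
  have "G_num \<alpha> (scale_set T unit_cube) \<le> L" if T: "\<forall>i. 1 \<le> T $ i" for T :: "real^'d"
  proof -
    define X where "X = (\<lambda>m. frac (m \<bullet> \<alpha>)) ` boxI T"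
    have SX: "S_set \<alpha> (scale_set T unit_cube) = X" unfolding X_def
    proof (rule S_set_box)
      show "\<forall>i. 0 < T $ i" using T by (metis less_le_trans zero_less_one)
    qed
    have finX: "finite X" unfolding X_def by (intro finite_imageI boxI_finite)
    have subX: "X \<subseteq> {0..<1}" unfolding X_def by (auto simp: frac_lt_1)
    have LX: "real L * x \<in> \<int>" if "x \<in> X" for x
    proof -
      obtain m where m: "m \<in> boxI T" "x = frac (m \<bullet> \<alpha>)" using \<open>x \<in> X\<close> X_def by auto
      have "real L * (m \<bullet> \<alpha>) = (\<Sum>i\<in>UNIV. m$i * (real L * \<alpha>$i))" by (simp add: inner_sum sum_distrib_left algebra_simps)
      also have "\<dots> \<in> \<int>"
      proof (rule Ints_sum)
        fix i show "m$i * (real L * \<alpha>$i) \<in> \<int>" using m(1) L(2)[of i] unfolding boxI_def by (rule_tac Ints_mult) auto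
      qed
      finally have "real L * (m \<bullet> \<alpha>) - real L * of_int \<lfloor>m \<bullet> \<alpha>\<rfloor> \<in> \<int>" by (intro Ints_diff) auto
      then show ?thesis unfolding m(2) frac_def by (simp add: right_diff_distrib)
    qed
    have "ngap X ` X \<subseteq> (\<lambda>k. of_int k / real L) ` {1..int L}"
    proof
      fix g assume "g \<in> ngap X ` X"
      then obtain x where x: "x \<in> X" "g = ngap X x" by auto
      have gpos: "g > 0" using ngap_props(1)[OF finX subX x(1)] x by simp
      have "real L * g \<in> \<int> \<and> g \<le> 1"
      proof (cases "\<exists>y\<in>X. x < y")
        case True
        have "{y\<in>X. x < y} \<noteq> {}" "finite {y\<in>X. x < y}" using True finX by auto
        then have y: "Min {y\<in>X. x < y} \<in> X" using Min_in by blast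
        have g: "g = Min {y\<in>X. x < y} - x" using x True unfolding ngap_def by simp
        have "Min {y\<in>X. x < y} < 1" "0 \<le> x" using y x(1) subX by auto
        then show ?thesis using LX[OF y] LX[OF x(1)] unfolding g
          by (auto simp: right_diff_distrib intro: Ints_diff)
      next
        case False
        have ne: "X \<noteq> {}" using x by auto
        have y: "Min X \<in> X" "Min X \<le> x" using Min_in[OF finX ne] Min_le[OF finX x(1)] by auto
        have g: "g = Min X + 1 - x" using x False unfolding ngap_def by simp
        have "real L * g = real L * Min X + of_int (int L) - real L * x" unfolding g by (simp add: algebra_simps)
        also have "\<dots> \<in> \<int>" using LX[OF y(1)] LX[OF x(1)] by (intro Ints_diff Ints_add) auto
        finally show ?thesis using y unfolding g by simp
      qed
      then obtain k where k: "real L * g = of_int k" "g \<le> 1" by (auto elim: Ints_cases)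
      have "g = of_int k / real L" using k L(1) by (simp add: field_simps)
      moreover have "1 \<le> k"
      proof -
        have "0 < real L * g" using gpos L(1) by simp
        then show ?thesis using k by simp
      qed
      moreover have "k \<le> int L"
      proof -
        have "real L * g \<le> real L" using k(2) L(1) by simp
        then show ?thesis using k by simp
      qed
      ultimately show "g \<in> (\<lambda>k. of_int k / real L) ` {1..int L}" by auto
    qed
    then have "card (ngap X ` X) \<le> card ((\<lambda>k. of_int k / real L) ` {1..int L})"
      by (intro card_mono) auto
    also have "\<dots> \<le> card {1..int L}" by (rule card_image_le) auto
    finally show ?thesis unfolding G_num_def SX circle_gaps_ngap by simp
  qed
  then show ?thesis by blast
qed

theorem theorem1p4:
  fixes \<alpha> r s :: "real ^ 'd" and \<beta> :: real
  assumes "\<forall>i. r $ i \<in> \<rat>" and "\<forall>i. s $ i \<in> \<rat>"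
    and "\<alpha> = \<beta> *\<^sub>R r + s"
  shows "\<exists>B::nat. \<forall>T :: real ^ 'd. (\<forall>i. 1 \<le> T $ i) \<longrightarrow> G_num \<alpha> (scale_set T unit_cube) \<le> B"
proof (cases "\<beta> \<in> \<rat>")
  case True
  have "\<forall>i. \<alpha>$i \<in> \<rat>" using assms True by auto
  then show ?thesis by (rule rat_case)
next
  case False
  obtain Q1 :: nat where Q1: "Q1 > 0" "\<forall>i. real Q1 * r$i \<in> \<int>" using common_denom[OF assms(1)] by blast
  obtain Q2 :: nat where Q2: "Q2 > 0" "\<forall>i. real Q2 * s$i \<in> \<int>" using common_denom[OF assms(2)] by blast
  define Q where "Q = Q1 * Q2"
  have Qpos: "Q > 0" using Q1 Q2 unfolding Q_def by simp
  define a where "a = real Q *\<^sub>R r"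
  define b where "b = real Q *\<^sub>R s"
  define \<theta> where "\<theta> = \<beta> / real Q"
  have aint: "a$i \<in> \<int>" for i
  proof -
    have "a$i = real Q2 * (real Q1 * r$i)" unfolding a_def Q_def by simp
    then show ?thesis using Q1(2) by (metis Ints_mult Ints_of_nat)
  qed
  have bint: "b$i \<in> \<int>" for i
  proof -
    have "b$i = real Q1 * (real Q2 * s$i)" unfolding b_def Q_def by simp
    then show ?thesis using Q2(2) by (metis Ints_mult Ints_of_nat)
  qed
  have alpha: "\<alpha>$i = \<theta> * a$i + b$i / real Q" for i
    using Qpos unfolding assms(3) a_def b_def \<theta>_def by simp
  define A :: nat where "A = nat \<lceil>\<Sum>i\<in>UNIV. \<bar>a$i\<bar>\<rceil> + 1"
  have Ab: "\<bar>a$i\<bar> \<le> real A" for i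
  proof -
    have "\<bar>a$i\<bar> \<le> (\<Sum>i\<in>UNIV. \<bar>a$i\<bar>)" by (rule member_le_sum) auto
    also have "\<dots> \<le> real (nat \<lceil>\<Sum>i\<in>UNIV. \<bar>a$i\<bar>\<rceil>)" by linarith
    finally show ?thesis unfolding A_def by simp
  qed
  have A1: "A \<ge> 1" unfolding A_def by simp
  interpret gs: gapsetup \<alpha> a b \<theta> Q A
    using Qpos aint bint alpha Ab A1 by unfold_locales auto
  have irr: "\<theta> \<notin> \<rat>"
  proof
    assume "\<theta> \<in> \<rat>"
    then have "\<theta> * real Q \<in> \<rat>" by (intro Rats_mult) auto
    then show False using False Qpos unfolding \<theta>_def by simp
  qed
  have "\<forall>T :: real ^ 'd. (\<forall>i. 1 \<le> T $ i) \<longrightarrow> G_num \<alpha> (scale_set T unit_cube) \<le> 3 * (Q * (3 * A + 2)) ^ CARD('d)"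
    using gs.main_irr[OF irr] unfolding G_num_def by blast
  then show ?thesis by blast
qed

end
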